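(* In the process described in the context, for any item $j$ we have $\Pr[j\in\mathcal R_2\mid j\in\mathcal R_1]=1-o(1)$ as $k\to\infty$.
   Context: Consider a $k$-CS-PIP instance: matrix $\vec A\in[0,1]^{m\times n}$ (entries $a_{ij}$), each column having at most $k$ nonzero entries, and an optimal solution $\vec x$ of the LP $\max\{\vec w\cdot\vec x:\vec A\vec x\le\vec 1,\ \sum_{j\in\mathrm{big}(i)}x_j\le1\ \forall i,\ \vec x\in[0,1]^n\}$. Let $\alpha=k^{0.4}$, $\ell=80\log(k/\alpha)$, and for row $i$: $\mathrm{big}(i)=\{j:a_{ij}>1/2\}$, $\mathrm{med}(i)=\{j:1/\ell\le a_{ij}\le 1/2\}$, $\mathrm{tiny}(i)=\{j:0<a_{ij}<1/\ell\}$. Let $\mathcal R_0$ contain each item $j$ independently with probability $\alpha x_j/k$. For $j\in\mathcal R_0$: a medium blocking event occurs for $j$ if some row $i$ with $j\in\mathrm{med}(i)$ has $|\mathrm{med}(i)\cap\mathcal R_0|\ge 3$; a tiny blocking event occurs for $j$ if some row $i$ with $j\in\mathrm{tiny}(i)$ has $\sum_{j'\ne j,\ j'\in(\mathrm{med}(i)\cup\mathrm{tiny}(i))\cap\mathcal R_0}a_{ij'}>1-a_{ij}$ or $|\mathrm{med}(i)\cap\mathcal R_0|\ge2$. Let $\mathcal R_1$ be the items of $\mathcal R_0$ for which neither event occurs. Build a directed graph $G$ on vertex set $\mathcal R_1$ with an edge $j\to j'$ ($j'\ne j$) iff there is a row $i$ with $a_{ij}>0$ and $a_{ij'}>1/2$.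 Let $d=\alpha+\sqrt{\alpha\log\alpha}$ and let $\mathcal R_2$ be the set of items of $\mathcal R_1$ whose out-degree in $G$ is at most $d$. *)

theory Defs
  imports "HOL-Probability.Probability"
begin

(* Items are 0..<n, rows are 0..<m; A i j is the entry a_ij; x j the LP solution. *)

definition alpha :: "nat \<Rightarrow> real" where
  "alpha k = real k powr 0.4"

definition ell :: "nat \<Rightarrow> real" where
  "ell k = 80 * ln (real k / alpha k)"

definition dbound :: "nat \<Rightarrow> real" where
  "dbound k = alpha k + sqrt (alpha k * ln (alpha k))"

definition big :: "(nat \<Rightarrow> nat \<Rightarrow> real) \<Rightarrow> nat \<Rightarrow> nat \<Rightarrow> nat set" where
  "big A n i = {j. j < n \<and> A i j > 1/2}"

definition med :: "nat \<Rightarrow> (nat \<Rightarrow> nat \<Rightarrow> real) \<Rightarrow> nat \<Rightarrow> nat \<Rightarrow> nat set" where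
  "med k A n i = {j. j < n \<and> 1 / ell k \<le> A i j \<and> A i j \<le> 1/2}"

definition tiny :: "nat \<Rightarrow> (nat \<Rightarrow> nat \<Rightarrow> real) \<Rightarrow> nat \<Rightarrow> nat \<Rightarrow> nat set" where
  "tiny k A n i = {j. j < n \<and> 0 < A i j \<and> A i j < 1 / ell k}"

definition kCS_matrix :: "nat \<Rightarrow> nat \<Rightarrow> nat \<Rightarrow> (nat \<Rightarrow> nat \<Rightarrow> real) \<Rightarrow> bool" where
  "kCS_matrix k m n A \<longleftrightarrow>
     (\<forall>i<m. \<forall>j<n. 0 \<le> A i j \<and> A i j \<le> 1) \<and>
     (\<forall>j<n. card {i. i < m \<and> A i j \<noteq> 0} \<le> k)"

definition LP_feasible :: "nat \<Rightarrow> nat \<Rightarrow> (nat \<Rightarrow> nat \<Rightarrow> real) \<Rightarrow> (nat \<Rightarrow> real) \<Rightarrow> bool" where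
  "LP_feasible m n A y \<longleftrightarrow>
     (\<forall>i<m. (\<Sum>j<n. A i j * y j) \<le> 1) \<and>
     (\<forall>i<m. (\<Sum>j\<in>big A n i. y j) \<le> 1) \<and>
     (\<forall>j<n. 0 \<le> y j \<and> y j \<le> 1)"

definition LP_optimal :: "nat \<Rightarrow> nat \<Rightarrow> (nat \<Rightarrow> nat \<Rightarrow> real) \<Rightarrow> (nat \<Rightarrow> real) \<Rightarrow> (nat \<Rightarrow> real) \<Rightarrow> bool" where
  "LP_optimal m n A w x \<longleftrightarrow> LP_feasible m n A x \<and>
     (\<forall>y. LP_feasible m n A y \<longrightarrow> (\<Sum>j<n. w j * y j) \<le> (\<Sum>j<n. w j * x j))"

(* distribution of R_0: item j is included independently with probability alpha x_j / k;
   an outcome is the indicator function of R_0 *)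
definition R0_pmf :: "nat \<Rightarrow> nat \<Rightarrow> (nat \<Rightarrow> real) \<Rightarrow> (nat \<Rightarrow> bool) pmf" where
  "R0_pmf k n x = Pi_pmf {..<n} False (\<lambda>j. bernoulli_pmf (alpha k * x j / real k))"

definition med_block :: "nat \<Rightarrow> nat \<Rightarrow> nat \<Rightarrow> (nat \<Rightarrow> nat \<Rightarrow> real) \<Rightarrow> nat set \<Rightarrow> nat \<Rightarrow> bool" where
  "med_block k m n A R j \<longleftrightarrow>
     (\<exists>i<m. j \<in> med k A n i \<and> card (med k A n i \<inter> R) \<ge> 3)"

definition tiny_block :: "nat \<Rightarrow> nat \<Rightarrow> nat \<Rightarrow> (nat \<Rightarrow> nat \<Rightarrow> real) \<Rightarrow> nat set \<Rightarrow> nat \<Rightarrow> bool" where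
  "tiny_block k m n A R j \<longleftrightarrow>
     (\<exists>i<m. j \<in> tiny k A n i \<and>
        ((\<Sum>j'\<in>((med k A n i \<union> tiny k A n i) \<inter> R) - {j}. A i j') > 1 - A i j
         \<or> card (med k A n i \<inter> R) \<ge> 2))"

definition R1 :: "nat \<Rightarrow> nat \<Rightarrow> nat \<Rightarrow> (nat \<Rightarrow> nat \<Rightarrow> real) \<Rightarrow> nat set \<Rightarrow> nat set" where
  "R1 k m n A R = {j \<in> R. \<not> med_block k m n A R j \<and> \<not> tiny_block k m n A R j}"

definition out_nbrs :: "nat \<Rightarrow> (nat \<Rightarrow> nat \<Rightarrow> real) \<Rightarrow> nat set \<Rightarrow> nat \<Rightarrow> nat set" where
  "out_nbrs m A S j = {j' \<in> S. j' \<noteq> j \<and> (\<exists>i<m. A i j > 0 \<and> A i j' > 1/2)}"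

definition R2 :: "nat \<Rightarrow> nat \<Rightarrow> nat \<Rightarrow> (nat \<Rightarrow> nat \<Rightarrow> real) \<Rightarrow> nat set \<Rightarrow> nat set" where
  "R2 k m n A R = (let S = R1 k m n A R in
     {j \<in> S. real (card (out_nbrs m A S j)) \<le> dbound k})"

end

theory Submission
  imports Defs
begin

definition BP :: "nat set \<Rightarrow> (nat \<Rightarrow> real) \<Rightarrow> (nat \<Rightarrow> bool) pmf" where
  "BP I p = Pi_pmf I False (\<lambda>i. bernoulli_pmf (p i))"

lemma BP_finite: "finite I \<Longrightarrow> finite (set_pmf (BP I p))"
  unfolding BP_def
  by (rule finite_subset[OF set_Pi_pmf_subset']) auto

lemma BP_integrable: "finite I \<Longrightarrow> integrable (measure_pmf (BP I p)) (f :: _ \<Rightarrow> real)"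
  by (rule integrable_measure_pmf_finite[OF BP_finite])

lemma BP_empty: "BP {} p = return_pmf (\<lambda>_. False)"
  by (simp add: BP_def)

lemma BP_insert_expect:
  fixes h :: "(nat \<Rightarrow> bool) \<Rightarrow> real"
  assumes "finite I" "a \<notin> I" "0 \<le> p a" "p a \<le> 1"
  shows "measure_pmf.expectation (BP (insert a I) p) h =
     p a * measure_pmf.expectation (BP I p) (\<lambda>f. h (f(a:=True)))
   + (1 - p a) * measure_pmf.expectation (BP I p) (\<lambda>f. h (f(a:=False)))"
proof -
  have eq: "BP (insert a I) p = bind_pmf (bernoulli_pmf (p a)) (\<lambda>y. map_pmf (\<lambda>f. f(a:=y)) (BP I p))"
    unfolding BP_def using assms
    by (subst Pi_pmf_insert') (auto simp: map_pmf_def)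
  have "measure_pmf.expectation (BP (insert a I) p) h =
     (\<Sum>y\<in>UNIV. pmf (bernoulli_pmf (p a)) y *\<^sub>R measure_pmf.expectation (map_pmf (\<lambda>f. f(a:=y)) (BP I p)) h)"
    unfolding eq
    by (rule pmf_expectation_bind) (auto intro: BP_finite assms)
  also have "\<dots> = p a * measure_pmf.expectation (BP I p) (\<lambda>f. h (f(a:=True)))
   + (1 - p a) * measure_pmf.expectation (BP I p) (\<lambda>f. h (f(a:=False)))"
    using assms by (simp add: UNIV_bool)
  finally show ?thesis .
qed

lemma expect_mono_BP:
  fixes f g :: "(nat \<Rightarrow> bool) \<Rightarrow> real"
  assumes "finite I" "\<And>w. f w \<le> g w"
  shows "measure_pmf.expectation (BP I p) f \<le> measure_pmf.expectation (BP I p) g"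
  by (rule integral_mono) (auto intro: BP_integrable assms)

lemma harris:
  fixes f g :: "(nat \<Rightarrow> bool) \<Rightarrow> real"
  assumes "finite I" "\<And>i. 0 \<le> p i" "\<And>i. p i \<le> 1" "mono f" "antimono g"
  shows "measure_pmf.expectation (BP I p) (\<lambda>w. f w * g w)
     \<le> measure_pmf.expectation (BP I p) f * measure_pmf.expectation (BP I p) g"
  using assms(1,4,5)
proof (induction I arbitrary: f g rule: finite_induct)
  case empty
  then show ?case by (simp add: BP_empty)
next
  case (insert a I)
  define q where "q = p a"
  have q: "0 \<le> q" "q \<le> 1" using assms q_def by auto
  define F1 where "F1 = measure_pmf.expectation (BP I p) (\<lambda>w. f (w(a:=True)))"
  define F0 where "F0 = measure_pmf.expectation (BP I p) (\<lambda>w. f (w(a:=False)))"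
  define G1 where "G1 = measure_pmf.expectation (BP I p) (\<lambda>w. g (w(a:=True)))"
  define G0 where "G0 = measure_pmf.expectation (BP I p) (\<lambda>w. g (w(a:=False)))"
  have le: "w(a:=False) \<le> w(a:=True)" for w :: "nat \<Rightarrow> bool"
    by (auto simp: le_fun_def)
  have F: "F0 \<le> F1" unfolding F0_def F1_def
    by (rule expect_mono_BP[OF insert.hyps(1)]) (use insert.prems(1) le in \<open>auto simp: mono_def\<close>)
  have G: "G1 \<le> G0" unfolding G0_def G1_def
    by (rule expect_mono_BP[OF insert.hyps(1)]) (use insert.prems(2) le in \<open>auto simp: antimono_def\<close>)
  have m1: "mono (\<lambda>w. f (w(a:=b)))" for b
  proof (rule monoI)
    fix x y :: "nat \<Rightarrow> bool" assume "x \<le> y"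
    then have "x(a:=b) \<le> y(a:=b)" by (auto simp: le_fun_def)
    then show "f (x(a:=b)) \<le> f (y(a:=b))" using insert.prems(1) by (rule monoD[rotated])
  qed
  have a1: "antimono (\<lambda>w. g (w(a:=b)))" for b
  proof (rule antimonoI)
    fix x y :: "nat \<Rightarrow> bool" assume "x \<le> y"
    then have "x(a:=b) \<le> y(a:=b)" by (auto simp: le_fun_def)
    then show "g (y(a:=b)) \<le> g (x(a:=b))" using insert.prems(2) by (rule antimonoD[rotated])
  qed
  have "measure_pmf.expectation (BP (insert a I) p) (\<lambda>w. f w * g w)
     = q * measure_pmf.expectation (BP I p) (\<lambda>w. f (w(a:=True)) * g (w(a:=True)))
     + (1-q) * measure_pmf.expectation (BP I p) (\<lambda>w. f (w(a:=False)) * g (w(a:=False)))"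
    unfolding q_def by (rule BP_insert_expect) (use insert assms in auto)
  also have "\<dots> \<le> q * (F1 * G1) + (1-q) * (F0 * G0)"
    unfolding F1_def G1_def F0_def G0_def
    by (intro add_mono mult_left_mono insert.IH m1 a1) (use q in auto)
  also have "\<dots> \<le> (q * F1 + (1-q) * F0) * (q * G1 + (1-q) * G0)"
  proof -
    have "(q * F1 + (1-q) * F0) * (q * G1 + (1-q) * G0) - (q * (F1 * G1) + (1-q) * (F0 * G0))
       = (q * (1-q)) * ((F1 - F0) * (G0 - G1))"
      by (simp add: algebra_simps)
    moreover have "0 \<le> q * (1-q) * ((F1 - F0) * (G0 - G1))"
      using q F G by (intro mult_nonneg_nonneg) auto
    ultimately show ?thesis by linarith
  qed
  also have "\<dots> = measure_pmf.expectation (BP (insert a I) p) f * measure_pmf.expectation (BP (insert a I) p) g"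
    unfolding F1_def F0_def G1_def G0_def q_def
    by (subst (1 2) BP_insert_expect) (use insert assms in auto)
  finally show ?case .
qed

lemma indep_coord:
  fixes h :: "(nat \<Rightarrow> bool) \<Rightarrow> real"
  assumes "finite I" "a \<in> I" "0 \<le> p a" "p a \<le> 1" "\<And>w b. h (w(a:=b)) = h w"
  shows "measure_pmf.expectation (BP I p) (\<lambda>w. (if w a then 1 else 0) * h w)
     = p a * measure_pmf.expectation (BP I p) h"
proof -
  have I: "I = insert a (I - {a})" using assms by auto
  have "measure_pmf.expectation (BP I p) (\<lambda>w. (if w a then 1 else 0) * h w)
     = p a * measure_pmf.expectation (BP (I-{a}) p) h"
    by (subst I, subst BP_insert_expect) (use assms in auto)
  also have "measure_pmf.expectation (BP (I-{a}) p) h = measure_pmf.expectation (BP I p) h"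
    by (subst (2) I, subst BP_insert_expect) (use assms in \<open>auto simp: algebra_simps\<close>)
  finally show ?thesis .
qed


lemma BP_lin:
  fixes Z :: "(nat \<Rightarrow> bool) \<Rightarrow> real"
  assumes "finite I"
  shows "measure_pmf.expectation (BP I p) (\<lambda>w. c + Z w) = c + measure_pmf.expectation (BP I p) Z"
    and "measure_pmf.expectation (BP I p) (\<lambda>w. c * Z w) = c * measure_pmf.expectation (BP I p) Z"
proof -
  show "measure_pmf.expectation (BP I p) (\<lambda>w. c + Z w) = c + measure_pmf.expectation (BP I p) Z"
    by (subst Bochner_Integration.integral_add) (auto intro: BP_integrable[OF assms])
  show "measure_pmf.expectation (BP I p) (\<lambda>w. c * Z w) = c * measure_pmf.expectation (BP I p) Z"
    by simp
qed

definition Zs :: "nat set \<Rightarrow> (nat \<Rightarrow> real) \<Rightarrow> (nat \<Rightarrow> bool) \<Rightarrow> real" where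
  "Zs N p w = (\<Sum>i\<in>N. (if w i then 1 else 0) - p i)"

lemma Zs_upd: "a \<notin> N \<Longrightarrow> Zs N p (w(a:=b)) = Zs N p w"
  unfolding Zs_def by (intro sum.cong) auto

lemma Zs_insert: "finite N \<Longrightarrow> a \<notin> N \<Longrightarrow> Zs (insert a N) p w = ((if w a then 1 else 0) - p a) + Zs N p w"
  unfolding Zs_def by simp

lemma Zs_moments:
  assumes "finite I" "\<And>i. 0 \<le> p i" "\<And>i. p i \<le> 1"
  shows "N \<subseteq> I \<Longrightarrow> measure_pmf.expectation (BP I p) (Zs N p) = 0 \<and>
         measure_pmf.expectation (BP I p) (\<lambda>w. (Zs N p w)^2) = (\<Sum>i\<in>N. p i * (1 - p i))"
  using assms(1)
proof (induction I arbitrary: N rule: finite_induct)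
  case empty
  then show ?case by (simp add: BP_empty Zs_def)
next
  case (insert a I)
  show ?case
  proof (cases "a \<in> N")
    case False
    then have N: "N \<subseteq> I" using insert by auto
    have e1: "measure_pmf.expectation (BP (insert a I) p) (Zs N p) = measure_pmf.expectation (BP I p) (Zs N p)"
      by (subst BP_insert_expect) (use insert assms False in \<open>auto simp: Zs_upd algebra_simps\<close>)
    have e2: "measure_pmf.expectation (BP (insert a I) p) (\<lambda>w. (Zs N p w)^2) = measure_pmf.expectation (BP I p) (\<lambda>w. (Zs N p w)^2)"
      by (subst BP_insert_expect) (use insert assms False in \<open>auto simp: Zs_upd algebra_simps\<close>)
    show ?thesis using e1 e2 insert.IH[OF N] by simp
  next
    case True
    define N' where "N' = N - {a}"
    have N': "N' \<subseteq> I" "a \<notin> N'" "finite N'" "N = insert a N'"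
      using insert True unfolding N'_def by (auto intro: finite_subset)
    note IH = insert.IH[OF N'(1)]
    have fI: "finite I" by (rule insert.hyps)
    have upd: "Zs (insert a N') p (w(a:=b)) = ((if b then 1 else 0) - p a) + Zs N' p w" for w b
      using N' by (simp add: Zs_insert Zs_upd)
    have e1: "measure_pmf.expectation (BP (insert a I) p) (Zs N p) = 0"
      unfolding N'(4)
      apply (subst BP_insert_expect)
      using insert assms N' IH
      by (simp_all only: upd if_True if_False BP_lin[OF fI]) simp_all
    have sq: "(x + Zs N' p w)^2 = x^2 + 2 * x * Zs N' p w + (Zs N' p w)^2" for x w
      by (simp add: power2_eq_square algebra_simps)
    have lin3: "measure_pmf.expectation (BP I p) (\<lambda>w. x^2 + 2 * x * Zs N' p w + (Zs N' p w)^2)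
       = x^2 + 2 * x * measure_pmf.expectation (BP I p) (Zs N' p) + measure_pmf.expectation (BP I p) (\<lambda>w. (Zs N' p w)^2)" for x
      by (subst Bochner_Integration.integral_add, (auto intro: BP_integrable[OF fI])[2],
          subst Bochner_Integration.integral_add, (auto intro: BP_integrable[OF fI])[2]) simp
    have e2: "measure_pmf.expectation (BP (insert a I) p) (\<lambda>w. (Zs N p w)^2) = (\<Sum>i\<in>N. p i * (1 - p i))"
      unfolding N'(4)
      apply (subst BP_insert_expect)
      using insert assms N' IH
      by (simp_all only: upd if_True if_False sq lin3) (simp_all add: power2_eq_square algebra_simps)
    show ?thesis using e1 e2 by simp
  qed
qed


lemma card_as_sum:
  assumes "finite N"
  shows "real (card (N \<inter> {i. w i})) = (\<Sum>i\<in>N. if w i then 1 else 0)"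
proof -
  have "(\<Sum>i\<in>N. if w i then 1 else (0::real)) = (\<Sum>i\<in>{i\<in>N. w i}. 1)"
    using assms by (simp add: sum.inter_filter[symmetric])
  also have "{i\<in>N. w i} = N \<inter> {i. w i}" by auto
  finally show ?thesis by simp
qed

lemma sum_N_le_k:
  fixes j :: nat
  assumes j_lt: "j < n" and kcs: "kCS_matrix k m n A" and lp: "LP_feasible m n A x"
  defines "N \<equiv> {j'. j' < n \<and> j' \<noteq> j \<and> (\<exists>i<m. A i j > 0 \<and> A i j' > 1/2)}"
  shows "(\<Sum>j'\<in>N. x j') \<le> real k"
proof -
  define Rj where "Rj = {i. i < m \<and> A i j \<noteq> 0}"
  have fN: "finite N" unfolding N_def by auto
  have fR: "finite Rj" unfolding Rj_def by auto
  have xnn: "\<And>i. i < n \<Longrightarrow> 0 \<le> x i" using lp unfolding LP_feasible_def by auto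
  have "(\<Sum>j'\<in>N. x j') \<le> (\<Sum>j'\<in>N. \<Sum>i\<in>Rj. if j' \<in> big A n i then x j' else 0)"
  proof (rule sum_mono)
    fix j' assume j': "j' \<in> N"
    then obtain i where i: "i < m" "A i j > 0" "A i j' > 1/2" "j' < n" unfolding N_def by auto
    have iR: "i \<in> Rj" using i unfolding Rj_def by auto
    have "x j' = (if j' \<in> big A n i then x j' else 0)" using i by (simp add: big_def)
    also have "\<dots> \<le> (\<Sum>i\<in>Rj. if j' \<in> big A n i then x j' else 0)"
      by (rule member_le_sum[OF iR]) (use xnn i fR in auto)
    finally show "x j' \<le> (\<Sum>i\<in>Rj. if j' \<in> big A n i then x j' else 0)" .
  qed
  also have "\<dots> = (\<Sum>i\<in>Rj. \<Sum>j'\<in>N. if j' \<in> big A n i then x j' else 0)"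
    by (rule sum.swap)
  also have "\<dots> \<le> (\<Sum>i\<in>Rj. 1)"
  proof (rule sum_mono)
    fix i assume iR: "i \<in> Rj"
    have "(\<Sum>j'\<in>N. if j' \<in> big A n i then x j' else 0) = (\<Sum>j'\<in>{j'\<in>N. j' \<in> big A n i}. x j')"
      using fN by (simp add: sum.inter_filter)
    also have "\<dots> \<le> (\<Sum>j'\<in>big A n i. x j')"
      by (rule sum_mono2) (use xnn in \<open>auto simp: big_def\<close>)
    also have "\<dots> \<le> 1" using lp iR unfolding LP_feasible_def Rj_def by auto
    finally show "(\<Sum>j'\<in>N. if j' \<in> big A n i then x j' else 0) \<le> 1" .
  qed
  also have "\<dots> = real (card Rj)" by simp
  also have "\<dots> \<le> real k"
    using kcs j_lt unfolding kCS_matrix_def Rj_def by auto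
  finally show ?thesis .
qed


lemma mb_mono:
  assumes "R \<subseteq> R'" "med_block k m n A R j"
  shows "med_block k m n A R' j"
proof -
  obtain i where i: "i < m" "j \<in> med k A n i" "card (med k A n i \<inter> R) \<ge> 3"
    using assms(2) unfolding med_block_def by auto
  have "finite (med k A n i \<inter> R')" unfolding med_def by auto
  then have "card (med k A n i \<inter> R) \<le> card (med k A n i \<inter> R')"
    by (rule card_mono) (use assms in auto)
  then show ?thesis using i unfolding med_block_def by auto
qed

lemma tb_mono:
  assumes kcs: "kCS_matrix k m n A" and "R \<subseteq> R'" "tiny_block k m n A R j"
  shows "tiny_block k m n A R' j"
proof -
  obtain i where i: "i < m" "j \<in> tiny k A n i"
    "(\<Sum>j'\<in>((med k A n i \<union> tiny k A n i) \<inter> R) - {j}. A i j') > 1 - A i j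
         \<or> card (med k A n i \<inter> R) \<ge> 2"
    using assms(3) unfolding tiny_block_def by auto
  have f: "finite (med k A n i \<inter> R')" unfolding med_def by auto
  have c: "card (med k A n i \<inter> R) \<le> card (med k A n i \<inter> R')"
    by (rule card_mono[OF f]) (use assms in auto)
  have f2: "finite (((med k A n i \<union> tiny k A n i) \<inter> R') - {j})" unfolding med_def tiny_def by auto
  have s: "(\<Sum>j'\<in>((med k A n i \<union> tiny k A n i) \<inter> R) - {j}. A i j')
      \<le> (\<Sum>j'\<in>((med k A n i \<union> tiny k A n i) \<inter> R') - {j}. A i j')"
    by (rule sum_mono2[OF f2]) (use assms(2) kcs i(1) in \<open>auto simp: kCS_matrix_def med_def tiny_def\<close>)
  show ?thesis using i c s unfolding tiny_block_def by force
qed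

lemma alpha_facts:
  assumes "k \<ge> 2"
  shows "1 < alpha k" "alpha k \<le> real k"
proof -
  have "(1::real) powr 0.4 < real k powr 0.4"
    by (rule powr_less_mono2) (use assms in auto)
  then show "1 < alpha k" by (simp add: alpha_def)
  have "real k powr 0.4 \<le> real k powr 1"
    by (rule powr_mono) (use assms in auto)
  then show "alpha k \<le> real k" using assms by (simp add: alpha_def)
qed

lemma prob_expect: "measure_pmf.prob M E = measure_pmf.expectation M (indicator E :: _ \<Rightarrow> real)"
  by simp

lemma main_bound:
  fixes k m n :: nat and A :: "nat \<Rightarrow> nat \<Rightarrow> real" and x w :: "nat \<Rightarrow> real" and j :: nat
  assumes k2: "k \<ge> 2" and kcs: "kCS_matrix k m n A" and lpo: "LP_optimal m n A w x" and jn: "j < n"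
    and pos: "measure_pmf.prob (R0_pmf k n x) {\<omega>. j \<in> R1 k m n A {i. \<omega> i}} > 0"
  shows "measure_pmf.prob (R0_pmf k n x) {\<omega>. j \<in> R2 k m n A {i. \<omega> i}}
         / measure_pmf.prob (R0_pmf k n x) {\<omega>. j \<in> R1 k m n A {i. \<omega> i}}
       \<ge> 1 - 1 / ln (alpha k)"
proof -
  have lp: "LP_feasible m n A x" using lpo unfolding LP_optimal_def by auto
  have x01: "\<And>i. i < n \<Longrightarrow> 0 \<le> x i \<and> x i \<le> 1" using lp unfolding LP_feasible_def by auto
  note af = alpha_facts[OF k2]
  define \<alpha> where "\<alpha> = alpha k"
  have a1: "1 < \<alpha>" "\<alpha> \<le> real k" using af \<alpha>_def by auto
  define p where "p i = (if i < n then \<alpha> * x i / real k else 0)" for i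
  have p0: "0 \<le> p i" for i unfolding p_def using x01 a1 by auto
  have p1: "p i \<le> 1" for i
  proof (cases "i < n")
    case True
    have "\<alpha> * x i \<le> real k * 1" by (rule mult_mono) (use a1 x01[OF True] in auto)
    then show ?thesis using True k2 unfolding p_def by (simp add: divide_le_eq)
  qed (simp add: p_def)
  define M where "M = BP {..<n} p"
  have RM: "R0_pmf k n x = M"
    unfolding M_def R0_pmf_def BP_def p_def \<alpha>_def by (rule Pi_pmf_cong) auto
  have supp: "\<And>w i. w \<in> set_pmf M \<Longrightarrow> w i \<Longrightarrow> i < n"
    using set_Pi_pmf_subset[of "{..<n}" False "\<lambda>i. bernoulli_pmf (p i)"] unfolding M_def BP_def
    by auto
  define S where "S w = {i. w i}" for w :: "nat \<Rightarrow> bool"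
  define N where "N = {j'. j' < n \<and> j' \<noteq> j \<and> (\<exists>i<m. A i j > 0 \<and> A i j' > 1/2)}"
  have fN: "finite N" and Nn: "N \<subseteq> {..<n}" and jN: "j \<notin> N" unfolding N_def by auto
  define d where "d = dbound k"
  define D where "D = {w. \<not> med_block k m n A (insert j (S w)) j \<and> \<not> tiny_block k m n A (insert j (S w)) j}"
  define Bad where "Bad = {w. d < real (card (N \<inter> S w))}"
  define E1 where "E1 = {\<omega>. j \<in> R1 k m n A {i. \<omega> i}}"
  define E2 where "E2 = {\<omega>. j \<in> R2 k m n A {i. \<omega> i}}"
  have E1D: "indicator E1 w = (if w j then 1 else 0) * (indicator D w :: real)" for w
  proof -
    have "w j \<Longrightarrow> insert j (S w) = {i. w i}" unfolding S_def by auto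
    then show ?thesis unfolding E1_def D_def R1_def S_def by (auto simp: indicator_def)
  qed
  have E1B: "indicator (E1 \<inter> Bad) w = (if w j then 1 else 0) * (indicator D w * indicator Bad w :: real)" for w
    using E1D[of w] by (cases "w j"; cases "w \<in> D"; cases "w \<in> E1"; cases "w \<in> Bad") (auto simp: indicator_def)
  have Dupd: "indicator D (w(j:=b)) = (indicator D w :: real)" for w b
  proof -
    have "insert j (S (w(j:=b))) = insert j (S w)" unfolding S_def by auto
    then show ?thesis unfolding D_def indicator_def by (simp only: mem_Collect_eq)
  qed
  have Bupd: "indicator Bad (w(j:=b)) = (indicator Bad w :: real)" for w b
  proof -
    have "N \<inter> S (w(j:=b)) = N \<inter> S w" using jN unfolding S_def by (auto split: if_splits)
    then show ?thesis unfolding Bad_def indicator_def by (simp only: mem_Collect_eq)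
  qed
  have monoB: "mono (indicator Bad :: _ \<Rightarrow> real)"
  proof (rule monoI)
    fix u v :: "nat \<Rightarrow> bool" assume "u \<le> v"
    then have "N \<inter> S u \<subseteq> N \<inter> S v" unfolding S_def le_fun_def by auto
    then have "card (N \<inter> S u) \<le> card (N \<inter> S v)" by (rule card_mono[rotated]) (use fN in auto)
    then show "(indicator Bad u :: real) \<le> indicator Bad v" unfolding Bad_def indicator_def by auto
  qed
  have antiD: "antimono (indicator D :: _ \<Rightarrow> real)"
  proof (rule antimonoI)
    fix u v :: "nat \<Rightarrow> bool" assume "u \<le> v"
    then have sub: "insert j (S u) \<subseteq> insert j (S v)" unfolding S_def le_fun_def by auto
    have "v \<in> D \<Longrightarrow> u \<in> D" unfolding D_def using mb_mono[OF sub] tb_mono[OF kcs sub] by auto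
    then show "(indicator D v :: real) \<le> indicator D u" unfolding indicator_def by auto
  qed
  have fin: "finite {..<n}" by simp
  have PE1: "measure_pmf.prob M E1 = p j * measure_pmf.expectation M (indicator D :: _ \<Rightarrow> real)"
    unfolding prob_expect E1D M_def
    by (rule indep_coord) (use jn p0 p1 Dupd in auto)
  have PE1B: "measure_pmf.prob M (E1 \<inter> Bad) = p j * measure_pmf.expectation M (\<lambda>w. indicator D w * indicator Bad w :: real)"
    unfolding prob_expect E1B M_def
    by (rule indep_coord) (use jn p0 p1 Dupd Bupd in auto)
  have H: "measure_pmf.expectation M (\<lambda>w. indicator Bad w * indicator D w :: real)
     \<le> measure_pmf.expectation M (indicator Bad) * measure_pmf.expectation M (indicator D)"
    unfolding M_def by (rule harris[OF fin p0 p1 monoB antiD])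
  have key1: "measure_pmf.prob M (E1 \<inter> Bad) \<le> measure_pmf.prob M E1 * measure_pmf.prob M Bad"
  proof -
    have "measure_pmf.prob M (E1 \<inter> Bad) = p j * measure_pmf.expectation M (\<lambda>w. indicator Bad w * indicator D w :: real)"
      unfolding PE1B by (simp add: mult.commute)
    also have "\<dots> \<le> p j * (measure_pmf.expectation M (indicator Bad) * measure_pmf.expectation M (indicator D))"
      by (rule mult_left_mono[OF H p0])
    also have "\<dots> = measure_pmf.prob M E1 * measure_pmf.prob M Bad"
      unfolding PE1 by simp
    finally show ?thesis .
  qed
  have sub: "E1 \<inter> set_pmf M \<subseteq> E2 \<union> (E1 \<inter> Bad)"
  proof
    fix u assume u: "u \<in> E1 \<inter> set_pmf M"
    show "u \<in> E2 \<union> (E1 \<inter> Bad)"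
    proof (cases "u \<in> E2")
      case False
      let ?S1 = "R1 k m n A {i. u i}"
      have j1: "j \<in> ?S1" using u unfolding E1_def by auto
      have gt: "d < real (card (out_nbrs m A ?S1 j))"
        using False j1 unfolding E2_def R2_def Let_def d_def by auto
      have "out_nbrs m A ?S1 j \<subseteq> N \<inter> S u"
        using supp[of u] u unfolding out_nbrs_def N_def S_def R1_def by auto
      then have "card (out_nbrs m A ?S1 j) \<le> card (N \<inter> S u)"
        by (rule card_mono[rotated]) (use fN in auto)
      then have "u \<in> Bad" using gt unfolding Bad_def by auto
      then show ?thesis using u by auto
    qed auto
  qed
  have key2: "measure_pmf.prob M E1 \<le> measure_pmf.prob M E2 + measure_pmf.prob M (E1 \<inter> Bad)"
  proof -
    have "measure_pmf.prob M E1 = measure_pmf.prob M (E1 \<inter> set_pmf M)"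
      by (simp add: measure_Int_set_pmf)
    also have "\<dots> \<le> measure_pmf.prob M (E2 \<union> (E1 \<inter> Bad))"
      by (rule measure_pmf.finite_measure_mono[OF sub]) simp
    also have "\<dots> \<le> measure_pmf.prob M E2 + measure_pmf.prob M (E1 \<inter> Bad)"
      by (rule measure_subadditive) (simp_all add: measure_pmf.emeasure_eq_measure)
    finally show ?thesis .
  qed
  define \<mu> where "\<mu> = (\<Sum>i\<in>N. p i)"
  have \<mu>le: "\<mu> \<le> \<alpha>"
  proof -
    have "\<mu> = (\<alpha> / real k) * (\<Sum>i\<in>N. x i)"
      unfolding \<mu>_def sum_distrib_left using Nn by (intro sum.cong) (auto simp: p_def)
    also have "\<dots> \<le> (\<alpha> / real k) * real k"
      by (rule mult_left_mono[OF sum_N_le_k[OF jn kcs lp, folded N_def]]) (use a1 in auto)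
    also have "\<dots> = \<alpha>" using k2 by simp
    finally show ?thesis .
  qed
  define t where "t = sqrt (\<alpha> * ln \<alpha>)"
  have lnpos: "0 < ln \<alpha>" using a1 by simp
  have tpos: "0 < t" unfolding t_def using a1 lnpos by simp
  have t2: "t^2 = \<alpha> * ln \<alpha>" unfolding t_def using a1 lnpos by simp
  have dd: "d = \<alpha> + t" unfolding d_def dbound_def t_def \<alpha>_def by simp
  have cardZ: "real (card (N \<inter> S u)) = Zs N p u + \<mu>" for u
    unfolding S_def card_as_sum[OF fN] Zs_def \<mu>_def by (simp add: sum_subtractf)
  have pw: "t^2 * indicator Bad u \<le> (Zs N p u)^2" for u
  proof (cases "u \<in> Bad")
    case True
    then have "t \<le> Zs N p u" using cardZ[of u] \<mu>le dd unfolding Bad_def by auto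
    then have "t^2 \<le> (Zs N p u)^2" by (rule power_mono) (use tpos in auto)
    then show ?thesis using True by simp
  qed simp
  have mom: "measure_pmf.expectation M (\<lambda>w. (Zs N p w)^2) = (\<Sum>i\<in>N. p i * (1 - p i))"
    using Zs_moments[OF fin p0 p1 Nn] unfolding M_def by auto
  have "t^2 * measure_pmf.prob M Bad = measure_pmf.expectation M (\<lambda>u. t^2 * indicator Bad u)"
    by simp
  also have "\<dots> \<le> measure_pmf.expectation M (\<lambda>w. (Zs N p w)^2)"
    unfolding M_def by (rule expect_mono_BP[OF fin pw])
  also have "\<dots> \<le> \<mu>"
    unfolding mom \<mu>_def by (rule sum_mono) (use p0 p1 in \<open>auto intro: mult_left_le\<close>)
  also have "\<dots> \<le> \<alpha>" by (rule \<mu>le)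
  finally have "\<alpha> * ln \<alpha> * measure_pmf.prob M Bad \<le> \<alpha>" unfolding t2 .
  then have PB: "measure_pmf.prob M Bad \<le> 1 / ln \<alpha>"
    using a1 lnpos by (simp add: field_simps)
  have P1: "measure_pmf.prob M E1 > 0" using pos unfolding RM E1_def .
  have "measure_pmf.prob M E1 * (1 - 1 / ln \<alpha>) \<le> measure_pmf.prob M E1 * (1 - measure_pmf.prob M Bad)"
    by (rule mult_left_mono) (use PB in auto)
  also have "\<dots> \<le> measure_pmf.prob M E2" using key1 key2 by (simp add: algebra_simps)
  finally have "1 - 1 / ln \<alpha> \<le> measure_pmf.prob M E2 / measure_pmf.prob M E1"
    using P1 by (simp add: le_divide_eq mult.commute)
  then show ?thesis unfolding RM E1_def E2_def \<alpha>_def .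
qed


lemma eps_lim: "(\<lambda>k. if 2 \<le> k then 1 / ln (alpha k) else 1) \<longlonglongrightarrow> 0"
proof -
  have l: "filterlim (\<lambda>k::nat. ln (real k)) at_top sequentially"
    by (rule filterlim_compose[OF ln_at_top filterlim_real_sequentially])
  have l2: "filterlim (\<lambda>k::nat. 0.4 * ln (real k)) at_top sequentially"
    by (rule filterlim_tendsto_pos_mult_at_top[OF tendsto_const _ l]) simp
  have t: "(\<lambda>k::nat. inverse (0.4 * ln (real k))) \<longlonglongrightarrow> 0"
    by (rule tendsto_inverse_0_at_top[OF l2])
  have ev: "eventually (\<lambda>k. inverse (0.4 * ln (real k)) = (if 2 \<le> k then 1 / ln (alpha k) else 1)) sequentially"
    using eventually_ge_at_top[of "2::nat"]
    by eventually_elim (auto simp: alpha_def ln_powr inverse_eq_divide)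
  show ?thesis by (rule Lim_transform_eventually[OF t ev])
qed

theorem lemma2:
  "\<exists>\<epsilon> :: nat \<Rightarrow> real. \<epsilon> \<longlonglongrightarrow> 0 \<and>
    (\<forall>k m n A w x j.
       kCS_matrix k m n A \<and> (\<forall>j<n. 0 \<le> w j) \<and> LP_optimal m n A w x \<and> j < n \<and>
       measure_pmf.prob (R0_pmf k n x) {\<omega>. j \<in> R1 k m n A {i. \<omega> i}} > 0 \<longrightarrow>
       measure_pmf.prob (R0_pmf k n x) {\<omega>. j \<in> R2 k m n A {i. \<omega> i}}
         / measure_pmf.prob (R0_pmf k n x) {\<omega>. j \<in> R1 k m n A {i. \<omega> i}}
       \<ge> 1 - \<epsilon> k)"
proof (intro exI conjI allI impI)
  show "(\<lambda>k. if 2 \<le> k then 1 / ln (alpha k) else 1) \<longlonglongrightarrow> 0" by (rule eps_lim)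
next
  fix k m n A w x j
  assume h: "kCS_matrix k m n A \<and> (\<forall>j<n. 0 \<le> w j) \<and> LP_optimal m n A w x \<and> j < n \<and>
       measure_pmf.prob (R0_pmf k n x) {\<omega>. j \<in> R1 k m n A {i. \<omega> i}} > 0"
  show "measure_pmf.prob (R0_pmf k n x) {\<omega>. j \<in> R2 k m n A {i. \<omega> i}}
         / measure_pmf.prob (R0_pmf k n x) {\<omega>. j \<in> R1 k m n A {i. \<omega> i}}
       \<ge> 1 - (if 2 \<le> k then 1 / ln (alpha k) else 1)"
  proof (cases "2 \<le> k")
    case True
    then show ?thesis using main_bound[OF True, of m n A w x j] h by auto
  next
    case False
    then show ?thesis by simp
  qed
qed

end
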